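(* Let $1\le p\le2$ and let $x=(\xi_n)_{n\in\mathbb{Z}}\in\ell_p(\mathbb{Z})$. Then the closed linear span of $\{x^{(2n)}:n\in\mathbb{Z}\}$ is not equal to $\ell_p(\mathbb{Z})$.
   Context: For $x=(\xi_j)_{j\in\mathbb{Z}}$ and $n\in\mathbb{Z}$, $x^{(n)}=(\xi_{j-n})_{j\in\mathbb{Z}}$ is the shift of $x$ to the right by $n$. *)

theory Defs
  imports "HOL-Analysis.Analysis"
begin

definition lp_space :: "real \<Rightarrow> (int \<Rightarrow> complex) set" where
  "lp_space p = {x. (\<lambda>n. norm (x n) powr p) summable_on UNIV}"

definition lp_norm :: "real \<Rightarrow> (int \<Rightarrow> complex) \<Rightarrow> real" where
  "lp_norm p x = (\<Sum>\<^sub>\<infinity>n. norm (x n) powr p) powr (1 / p)"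

definition shift :: "int \<Rightarrow> (int \<Rightarrow> complex) \<Rightarrow> (int \<Rightarrow> complex)" where
  "shift n x = (\<lambda>j. x (j - n))"

definition lin_span :: "(int \<Rightarrow> complex) set \<Rightarrow> (int \<Rightarrow> complex) set" where
  "lin_span S = {z. \<exists>F c. finite F \<and> F \<subseteq> S \<and> z = (\<lambda>j. \<Sum>v\<in>F. c v * v j)}"

definition closed_span :: "real \<Rightarrow> (int \<Rightarrow> complex) set \<Rightarrow> (int \<Rightarrow> complex) set" where
  "closed_span p S = {y \<in> lp_space p. \<forall>e>0. \<exists>z\<in>lin_span S. lp_norm p (\<lambda>j. y j - z j) < e}"

end

theory Submission
  imports Defs
begin

lemma finsupp_summable:
  fixes f :: "int \<Rightarrow> 'b::real_normed_vector"
  assumes "\<And>i. i \<noteq> j0 \<Longrightarrow> f i = 0"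
  shows "f summable_on UNIV" "infsum f UNIV = f j0"
proof -
  have "(f summable_on UNIV) = (f summable_on {j0})"
    by (rule summable_on_cong_neutral) (use assms in auto)
  then show "f summable_on UNIV" by simp
  have "infsum f UNIV = infsum f {j0}"
    by (rule infsum_cong_neutral) (use assms in auto)
  then show "infsum f UNIV = f j0" by simp
qed

lemma lp_pointwise:
  assumes "p > 0" "u \<in> lp_space p"
  shows "norm (u i) \<le> lp_norm p u"
proof -
  have s: "(\<lambda>n. norm (u n) powr p) summable_on UNIV" using assms unfolding lp_space_def by auto
  have "sum (\<lambda>n. norm (u n) powr p) {i} \<le> (\<Sum>\<^sub>\<infinity>n. norm (u n) powr p)"
    by (rule finite_sum_le_infsum[OF s]) auto
  hence "norm (u i) powr p \<le> (\<Sum>\<^sub>\<infinity>n. norm (u n) powr p)" by simp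
  hence "(norm (u i) powr p) powr (1/p) \<le> (\<Sum>\<^sub>\<infinity>n. norm (u n) powr p) powr (1/p)"
    by (rule powr_mono2[rotated 2]) (use assms in auto)
  moreover have "(norm (u i) powr p) powr (1/p) = norm (u i)"
    using assms by (simp add: powr_powr)
  ultimately show ?thesis unfolding lp_norm_def by simp
qed

lemma lp_l2:
  assumes "1 \<le> p" "p \<le> 2" "u \<in> lp_space p"
  shows "(\<lambda>i. norm (u i)^2) summable_on UNIV"
    "(\<Sum>\<^sub>\<infinity>i. norm (u i)^2) \<le> lp_norm p u ^ 2"
proof -
  define N where "N = lp_norm p u"
  define S where "S = (\<Sum>\<^sub>\<infinity>n. norm (u n) powr p)"
  have s: "(\<lambda>n. norm (u n) powr p) summable_on UNIV" using assms unfolding lp_space_def by auto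
  have S0: "S \<ge> 0" unfolding S_def by (rule infsum_nonneg) auto
  have N: "N = S powr (1/p)" unfolding N_def S_def lp_norm_def by simp
  have N0: "N \<ge> 0" using N by simp
  have bd: "norm (u i)^2 \<le> N powr (2-p) * norm (u i) powr p" for i
  proof (cases "u i = 0")
    case True then show ?thesis by simp
  next
    case False
    have e: "norm (u i) powr (2-p) * norm (u i) powr p = norm (u i) powr 2"
      by (simp add: powr_add[symmetric])
    have "norm (u i)^2 = norm (u i) powr (2-p) * norm (u i) powr p"
      unfolding e by (simp add: powr_numeral)
    also have "\<dots> \<le> N powr (2-p) * norm (u i) powr p"
      apply (rule mult_right_mono)
       apply (rule powr_mono2)
      using assms lp_pointwise[of p u i] unfolding N_def by auto
    finally show ?thesis .
  qed
  have s2: "(\<lambda>i. N powr (2-p) * norm (u i) powr p) summable_on UNIV"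
    using s by (rule summable_on_cmult_right)
  show s3: "(\<lambda>i. norm (u i)^2) summable_on UNIV"
    by (rule summable_on_comparison_test[OF s2]) (use bd in auto)
  have "(\<Sum>\<^sub>\<infinity>i. norm (u i)^2) \<le> (\<Sum>\<^sub>\<infinity>i. N powr (2-p) * norm (u i) powr p)"
    by (rule infsum_mono[OF s3 s2]) (use bd in auto)
  also have "\<dots> = N powr (2-p) * S" unfolding S_def by (simp add: infsum_cmult_right')
  also have "S = N powr p" using N S0 assms by (simp add: powr_powr)
  also have "N powr (2-p) * N powr p = N powr 2" by (simp add: powr_add[symmetric])
  also have "\<dots> = N^2" using N0 by (simp add: powr_numeral)
  finally show "(\<Sum>\<^sub>\<infinity>i. norm (u i)^2) \<le> lp_norm p u ^ 2" unfolding N_def .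
qed


lemma lp_add:
  assumes "p > 0" "u \<in> lp_space p" "v \<in> lp_space p"
  shows "(\<lambda>i. u i + v i) \<in> lp_space p"
proof -
  have su: "(\<lambda>n. norm (u n) powr p) summable_on UNIV" using assms unfolding lp_space_def by auto
  have sv: "(\<lambda>n. norm (v n) powr p) summable_on UNIV" using assms unfolding lp_space_def by auto
  have s: "(\<lambda>n. 2 powr p * (norm (u n) powr p + norm (v n) powr p)) summable_on UNIV"
    by (intro summable_on_cmult_right summable_on_add su sv)
  have bd: "norm (u n + v n) powr p \<le> 2 powr p * (norm (u n) powr p + norm (v n) powr p)" for n
  proof -
    have "norm (u n + v n) \<le> 2 * max (norm (u n)) (norm (v n))"
      using norm_triangle_ineq[of "u n" "v n"] by linarith
    hence "norm (u n + v n) powr p \<le> (2 * max (norm (u n)) (norm (v n))) powr p"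
      by (rule powr_mono2[rotated 2]) (use assms in auto)
    also have "\<dots> = 2 powr p * max (norm (u n)) (norm (v n)) powr p"
      by (simp add: powr_mult)
    also have "max (norm (u n)) (norm (v n)) powr p \<le> norm (u n) powr p + norm (v n) powr p"
      by (cases "norm (u n) \<le> norm (v n)") (auto simp: max_def)
    finally show ?thesis by simp
  qed
  show ?thesis unfolding lp_space_def
    by (auto intro!: summable_on_comparison_test[OF s] bd)
qed

lemma lp_cmult:
  assumes "u \<in> lp_space p"
  shows "(\<lambda>i. c * u i) \<in> lp_space p"
proof -
  have su: "(\<lambda>n. norm (u n) powr p) summable_on UNIV" using assms unfolding lp_space_def by auto
  have "(\<lambda>n. norm c powr p * norm (u n) powr p) summable_on UNIV"
    by (rule summable_on_cmult_right[OF su])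
  then show ?thesis unfolding lp_space_def by (simp add: norm_mult powr_mult)
qed

lemma lp_sum:
  assumes "p > 0" "finite F" "\<And>v. v \<in> F \<Longrightarrow> g v \<in> lp_space p"
  shows "(\<lambda>i. \<Sum>v\<in>F. g v i) \<in> lp_space p"
  using assms(2,3)
proof (induction F rule: finite_induct)
  case empty
  then show ?case unfolding lp_space_def using assms(1) by simp
next
  case (insert a F)
  then have "(\<lambda>i. g a i + (\<Sum>v\<in>F. g v i)) \<in> lp_space p"
    by (intro lp_add assms(1)) auto
  then show ?case using insert by simp
qed

lemma lp_shift:
  assumes "u \<in> lp_space p"
  shows "shift n u \<in> lp_space p"
proof -
  have su: "(\<lambda>k. norm (u k) powr p) summable_on UNIV" using assms unfolding lp_space_def by auto
  have b: "bij_betw (\<lambda>j. j - n) UNIV UNIV"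
    by (rule bij_betw_byWitness[where f'="\<lambda>j. j + n"]) auto
  have "(\<lambda>j. norm (u (j - n)) powr p) summable_on UNIV"
    using summable_on_reindex_bij_betw[OF b, of "\<lambda>k. norm (u k) powr p"] su by simp
  then show ?thesis unfolding lp_space_def shift_def by simp
qed

lemma pair_bound:
  fixes y w :: "int \<Rightarrow> complex"
  assumes sy: "(\<lambda>i. norm (y i)^2) summable_on UNIV"
    and sw: "(\<lambda>i. norm (w i)^2) summable_on UNIV" and t: "t > 0"
  shows "(\<lambda>i. y i * w i) summable_on UNIV"
    "norm (\<Sum>\<^sub>\<infinity>i. y i * w i) \<le> (t * (\<Sum>\<^sub>\<infinity>i. norm (y i)^2) + (\<Sum>\<^sub>\<infinity>i. norm (w i)^2) / t) / 2"
proof -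
  have bd: "norm (y i * w i) \<le> (t * norm (y i)^2 + norm (w i)^2 / t) / 2" for i
  proof -
    define a where "a = norm (y i)"
    define b where "b = norm (w i)"
    have "0 \<le> (t * a - b)^2" by simp
    moreover have "(t * a - b)^2 = t^2 * a^2 - 2 * t * (a * b) + b^2"
      by (simp add: power2_eq_square algebra_simps)
    ultimately have h: "2 * t * (a * b) \<le> t^2 * a^2 + b^2" by linarith
    have e: "t * (t * a^2 + b^2 / t) = t^2 * a^2 + b^2"
      using t by (simp add: power2_eq_square algebra_simps)
    have "t * (2 * (a * b)) \<le> t * (t * a^2 + b^2 / t)"
      unfolding e using h by (simp add: algebra_simps)
    hence "2 * (a * b) \<le> t * a^2 + b^2 / t"
      using t by (rule mult_left_le_imp_le) 
    then show ?thesis unfolding a_def b_def by (simp add: norm_mult)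
  qed
  have e1: "(\<lambda>i. t * norm (y i)^2) summable_on UNIV" by (rule summable_on_cmult_right[OF sy])
  have e2: "(\<lambda>i. norm (w i)^2 / t) summable_on UNIV"
    using summable_on_cmult_left[OF sw, of "inverse t"] by (simp only: divide_inverse)
  have s: "(\<lambda>i. (t * norm (y i)^2 + norm (w i)^2 / t) / 2) summable_on UNIV"
    using summable_on_cmult_left[OF summable_on_add[OF e1 e2], of "inverse 2"] by (simp only: divide_inverse)
  have a: "(\<lambda>i. norm (y i * w i)) summable_on UNIV"
    by (rule summable_on_comparison_test[OF s]) (use bd in auto)
  then show "(\<lambda>i. y i * w i) summable_on UNIV"
    using summable_on_iff_abs_summable_on_complex by blast
  have "norm (\<Sum>\<^sub>\<infinity>i. y i * w i) \<le> (\<Sum>\<^sub>\<infinity>i. norm (y i * w i))"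
    by (rule norm_infsum_bound[OF a])
  also have "\<dots> \<le> (\<Sum>\<^sub>\<infinity>i. (t * norm (y i)^2 + norm (w i)^2 / t) / 2)"
    by (rule infsum_mono[OF a s]) (use bd in auto)
  also have "\<dots> = (t * (\<Sum>\<^sub>\<infinity>i. norm (y i)^2) + (\<Sum>\<^sub>\<infinity>i. norm (w i)^2) / t) / 2"
  proof -
    have "(\<Sum>\<^sub>\<infinity>i. (t * norm (y i)^2 + norm (w i)^2 / t) / 2)
        = (\<Sum>\<^sub>\<infinity>i. (t * norm (y i)^2 + norm (w i)^2 / t)) / 2"
      unfolding divide_inverse[of _ 2] by (rule infsum_cmult_left')
    also have "(\<Sum>\<^sub>\<infinity>i. (t * norm (y i)^2 + norm (w i)^2 / t))
        = (\<Sum>\<^sub>\<infinity>i. t * norm (y i)^2) + (\<Sum>\<^sub>\<infinity>i. norm (w i)^2 / t)"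
      by (rule infsum_add[OF e1 e2])
    also have "(\<Sum>\<^sub>\<infinity>i. t * norm (y i)^2) = t * (\<Sum>\<^sub>\<infinity>i. norm (y i)^2)"
      by (rule infsum_cmult_right')
    also have "(\<Sum>\<^sub>\<infinity>i. norm (w i)^2 / t) = (\<Sum>\<^sub>\<infinity>i. norm (w i)^2) / t"
      unfolding divide_inverse[of _ t] by (rule infsum_cmult_left')
    finally show ?thesis .
  qed
  finally show "norm (\<Sum>\<^sub>\<infinity>i. y i * w i) \<le> (t * (\<Sum>\<^sub>\<infinity>i. norm (y i)^2) + (\<Sum>\<^sub>\<infinity>i. norm (w i)^2) / t) / 2" .
qed


lemma has_sum_finsum0:
  fixes g :: "'v \<Rightarrow> int \<Rightarrow> complex"
  assumes "finite F" "\<And>v. v \<in> F \<Longrightarrow> (g v has_sum 0) UNIV"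
  shows "((\<lambda>i. \<Sum>v\<in>F. g v i) has_sum 0) UNIV"
  using assms
proof (induction F rule: finite_induct)
  case empty
  then show ?case by simp
next
  case (insert a F)
  have "((\<lambda>i. g a i + (\<Sum>v\<in>F. g v i)) has_sum (0 + 0)) UNIV"
    by (rule has_sum_add) (use insert in auto)
  then show ?case using insert by simp
qed

lemma annihilator_contra:
  fixes p :: real and x y :: "int \<Rightarrow> complex"
  assumes p1: "1 \<le> p" and p2: "p \<le> 2" and xl: "x \<in> lp_space p"
    and sy: "(\<lambda>i. norm (y i)^2) summable_on UNIV"
    and orth: "\<And>n. ((\<lambda>i. y i * shift (2 * n) x i) has_sum 0) UNIV"
    and yj: "y j0 \<noteq> 0"
  shows "closed_span p {shift (2 * n) x | n. True} \<noteq> lp_space p"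
proof
  define S where "S = {shift (2 * n) x | n. True}"
  assume eq: "closed_span p {shift (2 * n) x | n. True} = lp_space p"
  define d :: "int \<Rightarrow> complex" where "d = (\<lambda>j. if j = j0 then 1 else 0)"
  have "(\<lambda>n. norm (d n) powr p) summable_on UNIV"
    by (rule finsupp_summable(1)[of j0]) (simp add: d_def)
  hence dl: "d \<in> lp_space p" unfolding lp_space_def by simp
  define A where "A = (\<Sum>\<^sub>\<infinity>i. norm (y i)^2)"
  have A0: "A \<ge> 0" unfolding A_def by (rule infsum_nonneg) auto
  define c where "c = norm (y j0)"
  have c0: "c > 0" using yj unfolding c_def by simp
  define e where "e = min 1 (c / (A + 1))"
  have e0: "e > 0" unfolding e_def using c0 A0 by simp
  have ec: "e * (A + 1) \<le> c"
  proof -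
    have "e \<le> c / (A + 1)" unfolding e_def by simp
    hence "e * (A + 1) \<le> c / (A + 1) * (A + 1)" using A0 by (intro mult_right_mono) auto
    also have "\<dots> = c" using A0 by simp
    finally show ?thesis .
  qed
  from dl eq have "d \<in> closed_span p S" unfolding S_def by simp
  then obtain z where zs: "z \<in> lin_span S" and zn: "lp_norm p (\<lambda>j. d j - z j) < e"
    unfolding closed_span_def using e0 by blast
  from zs obtain F cf where F: "finite F" "F \<subseteq> S" and zdef: "z = (\<lambda>j. \<Sum>v\<in>F. cf v * v j)"
    unfolding lin_span_def by blast
  have vl: "v \<in> lp_space p" if "v \<in> S" for v
    using that lp_shift[OF xl] unfolding S_def by auto
  have zl: "z \<in> lp_space p"
    unfolding zdef using F
    by (intro lp_sum[where g="\<lambda>v j. cf v * v j", simplified]) (use p1 vl lp_cmult in auto)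
  have wl: "(\<lambda>j. d j - z j) \<in> lp_space p"
    using lp_add[OF _ dl lp_cmult[OF zl, of "-1"]] p1 by simp
  have yz: "((\<lambda>i. y i * z i) has_sum 0) UNIV"
  proof -
    have "((\<lambda>i. \<Sum>v\<in>F. cf v * (y i * v i)) has_sum 0) UNIV"
    proof (rule has_sum_finsum0[OF F(1)])
      fix v assume "v \<in> F"
      then obtain n where "v = shift (2 * n) x" using F unfolding S_def by auto
      then have "((\<lambda>i. y i * v i) has_sum 0) UNIV" using orth by simp
      then show "((\<lambda>i. cf v * (y i * v i)) has_sum 0) UNIV"
        using has_sum_cmult_right[of "\<lambda>i. y i * v i" UNIV 0 "cf v"] by simp
    qed
    moreover have "(\<lambda>i. \<Sum>v\<in>F. cf v * (y i * v i)) = (\<lambda>i. y i * z i)"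
      unfolding zdef by (auto simp: sum_distrib_left algebra_simps)
    ultimately show ?thesis by simp
  qed
  define w where "w = (\<lambda>j. d j - z j)"
  have sw: "(\<lambda>i. norm (w i)^2) summable_on UNIV"
    and Bw: "(\<Sum>\<^sub>\<infinity>i. norm (w i)^2) \<le> lp_norm p w ^ 2"
    using lp_l2[OF p1 p2 wl] unfolding w_def by auto
  have ln0: "lp_norm p w \<ge> 0" unfolding lp_norm_def by simp
  have "lp_norm p w ^ 2 < e ^ 2"
    using zn ln0 unfolding w_def by (intro power_strict_mono) auto
  with Bw have B: "(\<Sum>\<^sub>\<infinity>i. norm (w i)^2) < e^2" by linarith
  have yw: "(\<lambda>i. y i * w i) summable_on UNIV"
    and bd: "norm (\<Sum>\<^sub>\<infinity>i. y i * w i) \<le> (e * A + (\<Sum>\<^sub>\<infinity>i. norm (w i)^2) / e) / 2"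
    using pair_bound[OF sy sw e0] unfolding A_def by auto
  have "(\<Sum>\<^sub>\<infinity>i. norm (w i)^2) / e < e"
    using B e0 by (simp add: divide_less_eq power2_eq_square)
  with bd have bd2: "norm (\<Sum>\<^sub>\<infinity>i. y i * w i) \<le> e * (A + 1) / 2"
    by (simp add: algebra_simps)
  have "infsum (\<lambda>i. y i * d i) UNIV = y j0"
    using finsupp_summable(2)[of j0 "\<lambda>i. y i * d i"] by (simp add: d_def)
  moreover have "infsum (\<lambda>i. y i * d i) UNIV = infsum (\<lambda>i. y i * w i) UNIV + infsum (\<lambda>i. y i * z i) UNIV"
  proof -
    have "(\<lambda>i. y i * d i) = (\<lambda>i. y i * w i + y i * z i)"
      unfolding w_def by (auto simp: algebra_simps)
    then show ?thesis
      using infsum_add[OF yw has_sum_imp_summable[OF yz]] by simp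
  qed
  moreover have "infsum (\<lambda>i. y i * z i) UNIV = 0" using yz by (simp add: has_sum_iff)
  ultimately have "y j0 = infsum (\<lambda>i. y i * w i) UNIV" by simp
  hence "c \<le> e * (A + 1) / 2" using bd2 unfolding c_def by simp
  with ec c0 show False by linarith
qed


theorem lemma3p11:
  fixes p :: real and x :: "int \<Rightarrow> complex"
  assumes "1 \<le> p" and "p \<le> 2" and "x \<in> lp_space p"
  shows "closed_span p {shift (2 * n) x | n. True} \<noteq> lp_space p"
proof (cases "\<forall>i. x i = 0")
  case True
  define y :: "int \<Rightarrow> complex" where "y = (\<lambda>j. if j = 0 then 1 else 0)"
  show ?thesis
  proof (rule annihilator_contra[OF assms, of y 0])
    show "(\<lambda>i. norm (y i)^2) summable_on UNIV"
      by (rule finsupp_summable(1)[of 0]) (simp add: y_def)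
    show "((\<lambda>i. y i * shift (2 * n) x i) has_sum 0) UNIV" for n
    proof -
      have "(\<lambda>i. y i * shift (2 * n) x i) = (\<lambda>_. 0)" using True by (auto simp: shift_def)
      then show ?thesis by simp
    qed
    show "y 0 \<noteq> 0" by (simp add: y_def)
  qed
next
  case False
  then obtain m where xm: "x m \<noteq> 0" by auto
  define y :: "int \<Rightarrow> complex" where "y = (\<lambda>i. (if even i then 1 else -1) * x (1 - i))"
  have x2: "(\<lambda>i. norm (x i)^2) summable_on UNIV" using lp_l2[OF assms] by auto
  have b: "bij_betw (\<lambda>i::int. 1 - i) UNIV UNIV"
    by (rule bij_betw_byWitness[where f'="\<lambda>j. 1 - j"]) auto
  have sy: "(\<lambda>i. norm (y i)^2) summable_on UNIV"
  proof -
    have "(\<lambda>i. norm (x (1 - i))^2) summable_on UNIV"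
      using summable_on_reindex_bij_betw[OF b, of "\<lambda>k. norm (x k)^2"] x2 by simp
    moreover have "(\<lambda>i. norm (y i)^2) = (\<lambda>i. norm (x (1 - i))^2)"
      by (auto simp: y_def norm_mult)
    ultimately show ?thesis by simp
  qed
  show ?thesis
  proof (rule annihilator_contra[OF assms sy, of "1 - m"])
    show "y (1 - m) \<noteq> 0" using xm by (simp add: y_def)
    fix n :: int
    define f where "f = (\<lambda>i. y i * shift (2 * n) x i)"
    have sh2: "(\<lambda>i. norm (shift (2 * n) x i)^2) summable_on UNIV"
      using lp_l2[OF assms(1,2) lp_shift[OF assms(3)]] by auto
    have sf: "f summable_on UNIV"
      unfolding f_def using pair_bound(1)[OF sy sh2, of 1] by simp
    have b2: "bij_betw (\<lambda>i::int. 1 + 2 * n - i) UNIV UNIV"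
      by (rule bij_betw_byWitness[where f'="\<lambda>j. 1 + 2 * n - j"]) auto
    have fg: "f (1 + 2 * n - i) = - f i" for i
    proof -
      have "even (1 + 2 * n - i) \<longleftrightarrow> \<not> even i" by auto
      then show ?thesis
        unfolding f_def y_def shift_def by (auto simp: algebra_simps)
    qed
    have "infsum f UNIV = (\<Sum>\<^sub>\<infinity>i. f (1 + 2 * n - i))"
      using infsum_reindex_bij_betw[OF b2, of f] by simp
    also have "\<dots> = - infsum f UNIV" by (simp add: fg infsum_uminus)
    finally have "infsum f UNIV = 0" by simp
    then show "((\<lambda>i. y i * shift (2 * n) x i) has_sum 0) UNIV"
      using sf unfolding f_def by (simp add: has_sum_iff)
  qed
qed

end
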